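(* Let $n\geq 4$ and let $3\leq i\leq n-1$. Let $p$ be any permutation of length $n$. Then one of $p$ and $c_i(p)$ has exactly one more alternating run than the other; that is, $|\mathrm{run}(p)-\mathrm{run}(c_i(p))|=1$.
   Context: For a permutation $p=p_1p_2\cdots p_n$ and an index $i\in[2,n-1]$, $p$ changes direction at $i$ if $p_{i-1}<p_i>p_{i+1}$ or $p_{i-1}>p_i<p_{i+1}$. The permutation $p$ has $k$ alternating runs (written $\mathrm{run}(p)=k$) if $p$ changes direction exactly $k-1$ times. For a string $s$ of distinct integers with underlying set $S$, the complement of $s$ relative to $S$ is the string obtained from $s$ by replacing, for each $j$, the $j$th smallest element of $S$ by the $j$th largest element of $S$. For $1\leq i\leq n$, $c_i$ is the map on permutations of length $n$ that leaves $p_1\cdots p_{i-1}$ unchanged and replaces the string $p_ip_{i+1}\cdots p_n$ by its complement relative to its underlying set $\{p_i,\dots,p_n\}$. *)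

theory Defs
  imports Main "HOL-Combinatorics.List_Permutation"
begin

(* Permutations of length n are lists that are permutations of [1..n].
   Positions are 1-based in the paper; "pos p k" is p_k = p ! (k-1). *)
definition pos :: "nat list \<Rightarrow> nat \<Rightarrow> nat" where
  "pos p k = p ! (k - 1)"

definition is_perm :: "nat \<Rightarrow> nat list \<Rightarrow> bool" where
  "is_perm n p \<longleftrightarrow> p <~~> [1..<n+1]"

definition changes_dir :: "nat list \<Rightarrow> nat \<Rightarrow> bool" where
  "changes_dir p i \<longleftrightarrow> 2 \<le> i \<and> i \<le> length p - 1 \<and>
     ((pos p (i-1) < pos p i \<and> pos p i > pos p (i+1)) \<or>
      (pos p (i-1) > pos p i \<and> pos p i < pos p (i+1)))"

definition run :: "nat list \<Rightarrow> nat" where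
  "run p = card {i. changes_dir p i} + 1"

(* complement of a string s of distinct integers relative to its underlying set S:
   the j-th smallest element of S is replaced by the j-th largest element of S *)
definition complement :: "nat list \<Rightarrow> nat list" where
  "complement s = (let L = sorted_list_of_set (set s); k = length L in
     map (\<lambda>x. L ! (k - 1 - card {y \<in> set s. y < x})) s)"

definition c_map :: "nat \<Rightarrow> nat list \<Rightarrow> nat list" where
  "c_map i p = take (i - 1) p @ complement (drop (i - 1) p)"

end

theory Submission
  imports Defs
begin

lemma cnt_lt:
  fixes s :: "nat list"
  assumes "y \<in> set s"
  shows "card {z \<in> set s. z < y} < card (set s)"
proof (rule psubset_card_mono)
  have "y \<notin> {z \<in> set s. z < y}" by simp
  then show "{z \<in> set s. z < y} \<subset> set s" using assms by blast
qed simp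

lemma cnt_mono:
  fixes s :: "nat list"
  assumes "x \<in> set s" "x < y"
  shows "card {z \<in> set s. z < x} < card {z \<in> set s. z < y}"
  by (rule psubset_card_mono) (use assms in auto)

lemma comp_len [simp]: "length (complement s) = length s"
  by (simp add: complement_def Let_def)

lemma comp_nth:
  "k < length s \<Longrightarrow> complement s ! k =
    sorted_list_of_set (set s) ! (card (set s) - 1 - card {y \<in> set s. y < s ! k})"
  by (simp add: complement_def Let_def)

lemma comp_rev:
  fixes s :: "nat list"
  assumes "x \<in> set s" "y \<in> set s" "x < y"
  shows "sorted_list_of_set (set s) ! (card (set s) - 1 - card {z \<in> set s. z < y})
       < sorted_list_of_set (set s) ! (card (set s) - 1 - card {z \<in> set s. z < x})"
proof -
  have a: "card {z \<in> set s. z < x} < card {z \<in> set s. z < y}" using cnt_mono assms by blast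
  have b: "card {z \<in> set s. z < y} < card (set s)" using cnt_lt assms by blast
  show ?thesis
    apply (rule sorted_wrt_nth_less[OF strict_sorted_list_of_set])
    using a b by auto
qed

lemma comp_less:
  fixes s :: "nat list"
  assumes "k < length s" "l < length s"
  shows "complement s ! k < complement s ! l \<longleftrightarrow> s ! l < s ! k"
proof -
  have k: "s ! k \<in> set s" and l: "s ! l \<in> set s" using assms by auto
  show ?thesis
    using comp_rev[OF k l] comp_rev[OF l k] assms
    by (cases "s ! k < s ! l"; cases "s ! l < s ! k") (auto simp: comp_nth)
qed

lemma comp_set:
  fixes s :: "nat list"
  assumes "k < length s"
  shows "complement s ! k \<in> set s"
proof -
  have "card {z \<in> set s. z < s ! k} < card (set s)" using cnt_lt[OF nth_mem[OF assms]] .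
  then have "card (set s) - 1 - card {z \<in> set s. z < s ! k} < length (sorted_list_of_set (set s))"
    by (simp add: length_sorted_list_of_set)
  then have "sorted_list_of_set (set s) ! (card (set s) - 1 - card {z \<in> set s. z < s ! k}) \<in> set s"
    using nth_mem set_sorted_list_of_set by (metis List.finite_set)
  then show ?thesis using assms by (simp add: comp_nth)
qed

lemma card_split:
  assumes "finite A" "finite B" "x \<noteq> y"
    and "\<forall>j. j \<noteq> x \<and> j \<noteq> y \<longrightarrow> (j \<in> A \<longleftrightarrow> j \<in> B)"
    and "((x \<in> A) \<noteq> (x \<in> B)) \<noteq> ((y \<in> A) \<noteq> (y \<in> B))"
  shows "\<bar>int (card A) - int (card B)\<bar> = 1"
proof -
  have eA: "card A = card (A - {x,y}) + card (A \<inter> {x,y})"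
    using assms(1) by (metis Int_commute add.commute card_Int_Diff finite_Int)
  have eB: "card B = card (B - {x,y}) + card (B \<inter> {x,y})"
    using assms(2) by (metis Int_commute add.commute card_Int_Diff finite_Int)
  have d: "A - {x,y} = B - {x,y}" using assms(4) by blast
  have cA: "card (A \<inter> {x,y}) = (if x \<in> A then 1 else 0) + (if y \<in> A then 1 else 0)"
    using assms(3) by (cases "x \<in> A"; cases "y \<in> A") (auto simp: Int_insert_right)
  have cB: "card (B \<inter> {x,y}) = (if x \<in> B then 1 else 0) + (if y \<in> B then 1 else 0)"
    using assms(3) by (cases "x \<in> B"; cases "y \<in> B") (auto simp: Int_insert_right)
  show ?thesis using eA eB d cA cB assms(5) by (auto split: if_splits)
qed

lemma bool_core:
  fixes a0 a1 a2 a3 b2 b3 :: nat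
  assumes "a0 \<noteq> a1" "a1 \<noteq> a2" "a2 \<noteq> a3" "a1 \<noteq> b2"
    and "b2 < b3 \<longleftrightarrow> a3 < a2" and "b3 < b2 \<longleftrightarrow> a2 < a3"
  shows "((((a0 < a1 \<and> a1 > a2) \<or> (a0 > a1 \<and> a1 < a2))) \<noteq>
          (((a0 < a1 \<and> a1 > b2) \<or> (a0 > a1 \<and> a1 < b2)))) \<noteq>
         ((((a1 < a2 \<and> a2 > a3) \<or> (a1 > a2 \<and> a2 < a3))) \<noteq>
          (((a1 < b2 \<and> b2 > b3) \<or> (a1 > b2 \<and> b2 < b3))))"
  using assms by (cases "a1 < a2"; cases "a1 < b2"; cases "a2 < a3"; cases "a0 < a1") auto


lemma cd_iff:
  assumes "2 \<le> j" "j \<le> length r - 1"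
  shows "changes_dir r j \<longleftrightarrow> ((r!(j-2) < r!(j-1) \<and> r!(j-1) > r!j) \<or> (r!(j-2) > r!(j-1) \<and> r!(j-1) < r!j))"
proof -
  have "j - 1 - 1 = j - 2" "j + 1 - 1 = j" by simp_all
  then show ?thesis using assms unfolding changes_dir_def pos_def by simp
qed

theorem mainTheorem1:
  fixes n i :: nat and p :: "nat list"
  assumes "n \<ge> 4" and "3 \<le> i" and "i \<le> n - 1" and "is_perm n p"
  shows "\<bar>int (run p) - int (run (c_map i p))\<bar> = 1"
proof -
  define m where "m = i - 1"
  define q where "q = c_map i p"
  have pp: "p <~~> [1..<n+1]" using assms(4) by (simp add: is_perm_def)
  have lp: "length p = n" using perm_length[OF pp] by simp
  have dp: "distinct p" using perm_distinct_iff[OF pp] by simp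
  have mn: "m < n" using assms m_def by simp
  have q_def': "q = take m p @ complement (drop m p)" by (simp add: q_def c_map_def m_def)
  have lq: "length q = n" using lp mn by (simp add: q_def')
  have Q1: "q ! k = p ! k" if "k < m" for k
    using that mn lp by (simp add: q_def' nth_append)
  have Qs: "q ! k = complement (drop m p) ! (k - m)" if "m \<le> k" for k
    using that mn lp by (simp add: q_def' nth_append)
  have Q2: "q ! k < q ! l \<longleftrightarrow> p ! l < p ! k" if "m \<le> k" "k < n" "m \<le> l" "l < n" for k l
    using that mn lp Qs comp_less[of "k - m" "drop m p" "l - m"] by simp
  have Q3: "q ! k \<noteq> p ! j" if "m \<le> k" "k < n" "j < m" for k j
  proof -
    have "q ! k \<in> set (drop m p)" using that lp Qs comp_set[of "k - m" "drop m p"] by simp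
    moreover have "p ! j \<in> set (take m p)"
    proof -
      have "j < length (take m p)" using that lp mn by simp
      then have "take m p ! j \<in> set (take m p)" by (rule nth_mem)
      then show ?thesis using that by simp
    qed
    moreover have "set (take m p) \<inter> set (drop m p) = {}"
      using dp by (metis append_take_drop_id distinct_append)
    ultimately show ?thesis by (metis IntI empty_iff)
  qed
  have same: "changes_dir p j \<longleftrightarrow> changes_dir q j" if "j \<noteq> i - 1" "j \<noteq> i" for j
  proof (cases "2 \<le> j \<and> j \<le> n - 1")
    case False
    then show ?thesis unfolding changes_dir_def lp lq by blast
  next
    case True
    show ?thesis
    proof (cases "j \<le> i - 2")
      case True
      then have "pos q (j-1) = pos p (j-1)" "pos q j = pos p j" "pos q (j+1) = pos p (j+1)"
        using Q1 assms(2) m_def by (simp_all add: pos_def)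
      then show ?thesis by (simp add: changes_dir_def lp lq)
    next
      case False
      then have ji: "j \<ge> i + 1" using that by simp
      have a: "pos q (j-1) < pos q j \<longleftrightarrow> pos p j < pos p (j-1)"
        "pos q j < pos q (j-1) \<longleftrightarrow> pos p (j-1) < pos p j"
        "pos q (j+1) < pos q j \<longleftrightarrow> pos p j < pos p (j+1)"
        "pos q j < pos q (j+1) \<longleftrightarrow> pos p (j+1) < pos p j"
        using Q2 ji True m_def assms(2) by (simp_all add: pos_def)
      show ?thesis unfolding changes_dir_def lp lq using a by auto
    qed
  qed
  define a0 where "a0 = p ! (i-3)"
  define a1 where "a1 = p ! (i-2)"
  define a2 where "a2 = p ! (i-1)"
  define a3 where "a3 = p ! i"
  define b2 where "b2 = q ! (i-1)"
  define b3 where "b3 = q ! i"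
  have in1: "i < n" using assms by simp
  have qa0: "q ! (i-3) = a0" using Q1 a0_def m_def assms(2) by simp
  have qa1: "q ! (i-2) = a1" using Q1 a1_def m_def assms(2) by simp
  have d01: "a0 \<noteq> a1" using dp lp in1 assms(2) unfolding a0_def a1_def by (simp add: nth_eq_iff_index_eq)
  have d12: "a1 \<noteq> a2" using dp lp in1 assms(2) unfolding a2_def a1_def by (simp add: nth_eq_iff_index_eq)
  have d23: "a2 \<noteq> a3" using dp lp in1 assms(2) unfolding a2_def a3_def by (simp add: nth_eq_iff_index_eq)
  have d1b: "a1 \<noteq> b2" proof -
    have "m \<le> i - 1" "i - 1 < n" "i - 2 < m" using in1 assms(2) m_def by simp_all
    then have "q ! (i-1) \<noteq> p ! (i-2)" by (rule Q3)
    then show ?thesis unfolding a1_def b2_def by simp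
  qed
  have o1: "b2 < b3 \<longleftrightarrow> a3 < a2" using Q2[of "i-1" i] in1 m_def unfolding a2_def a3_def b2_def b3_def by simp
  have o2: "b3 < b2 \<longleftrightarrow> a2 < a3" using Q2[of i "i-1"] in1 m_def unfolding a2_def a3_def b2_def b3_def by simp
  have s1: "2 \<le> i - 1" "i - 1 \<le> length p - 1" "i - 1 \<le> length q - 1"
    "2 \<le> i" "i \<le> length p - 1" "i \<le> length q - 1"
    using assms(2) in1 lp lq by simp_all
  have e: "i - 1 - 2 = i - 3" "i - 1 - 1 = i - 2" by simp_all
  have cp1: "changes_dir p (i-1) \<longleftrightarrow> ((a0 < a1 \<and> a1 > a2) \<or> (a0 > a1 \<and> a1 < a2))"
    using cd_iff[OF s1(1) s1(2)] unfolding e a0_def a1_def a2_def .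
  have cq1: "changes_dir q (i-1) \<longleftrightarrow> ((a0 < a1 \<and> a1 > b2) \<or> (a0 > a1 \<and> a1 < b2))"
    using cd_iff[OF s1(1) s1(3)] unfolding e qa0 qa1 b2_def .
  have cp2: "changes_dir p i \<longleftrightarrow> ((a1 < a2 \<and> a2 > a3) \<or> (a1 > a2 \<and> a2 < a3))"
    using cd_iff[OF s1(4) s1(5)] unfolding a1_def a2_def a3_def .
  have cq2: "changes_dir q i \<longleftrightarrow> ((a1 < b2 \<and> b2 > b3) \<or> (a1 > b2 \<and> b2 < b3))"
    using cd_iff[OF s1(4) s1(6)] unfolding qa1 b2_def b3_def .
  have core: "((changes_dir p (i-1)) \<noteq> (changes_dir q (i-1))) \<noteq> ((changes_dir p i) \<noteq> (changes_dir q i))"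
    unfolding cp1 cq1 cp2 cq2 by (rule bool_core[OF d01 d12 d23 d1b o1 o2])
  have fin: "finite {j. changes_dir r j}" for r
    by (rule finite_subset[of _ "{..length r}"]) (auto simp: changes_dir_def)
  have "\<bar>int (card {j. changes_dir p j}) - int (card {j. changes_dir q j})\<bar> = 1"
    apply (rule card_split[OF fin fin, of "i-1" i])
    using assms(2) same core by auto
  then show ?thesis by (simp add: run_def q_def)
qed

end
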